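(* Assume the setup below and fix $\hat x\in\mathbb S^2$. (i) For every $y\in K_D^{(\hat x)}$ there exists $\epsilon_0=\epsilon_0(y)>0$ such that $\phi^{(\hat x)}_{y,\eta,\epsilon}\in\mathrm{Range}(L_D^{(\hat x)})$ for all $\epsilon\in(0,\epsilon_0)$ and all $\eta\in[t_{\min},t_{\max})$. (ii) Let $\eta\in[t_{\min},t_{\max})$. If $y\notin\overline{K_{D,\eta}^{(\hat x)}}$, then $\phi^{(\hat x)}_{y,\eta,\epsilon}\notin\mathrm{Range}(L_D^{(\hat x)})$ for all $\epsilon>0$.
   Context: $D\subset\mathbb R^3$ is a bounded Lipschitz domain (open and connected) with $\mathbb R^3\setminus\overline D$ connected; $0\le t_{\min}<t_{\max}$; $S\in C([t_{\min},t_{\max}];L^\infty(D))$ is real-valued with $S\ge c_0>0$ a.e. on $D\times[t_{\min},t_{\max}]$. Let $0\le k_{\min}<k_{\max}$, $K=(k_{\max}-k_{\min})/2$, $X_D=L^2(D\times(t_{\min},t_{\max}))$, and $L_D^{(\hat x)}:X_D\to L^2(0,K)$, $(L_D^{(\hat x)}u)(\tau)=\int_{t_{\min}}^{t_{\max}}\int_D e^{{\rm i}\tau(t-\hat x\cdot y)}u(y,t)\,dy\,dt$. $\hat x\cdot D=\{\hat x\cdot y:y\in D\}$. In this setting (terminal moment $t_{\max}$ known) the test function is, for $\eta<t_{\max}$, $\epsilon>0$, $y\in\mathbb R^3$: $\phi^{(\hat x)}_{y,\eta,\epsilon}(k)=\frac{1}{(t_{\max}-\eta)|B_\epsilon(y)|}\int_{\eta}^{t_{\max}}\int_{B_\epsilon(y)}e^{{\rm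 i}k(t-\hat x\cdot z)}\,dz\,dt$, $k\in[0,K]$, with $B_\epsilon(y)$ the open ball and $|B_\epsilon(y)|$ its volume. The strips are $K_D^{(\hat x)}=\{y:\inf(\hat x\cdot D)<\hat x\cdot y<\sup(\hat x\cdot D)\}$ and $K_{D,\eta}^{(\hat x)}=\{y\in\mathbb R^3:\inf(\hat x\cdot D)<\hat x\cdot y<\sup(\hat x\cdot D)-t_{\min}+\eta\}$. *)

theory Defs
  imports "HOL-Analysis.Analysis"
begin

definition lipschitz_boundary :: "(real^3) set \<Rightarrow> bool" where
  "lipschitz_boundary D \<longleftrightarrow>
     (\<forall>p \<in> frontier D. \<exists>(R :: real^3 \<Rightarrow> real^3) (a::real) (L::real) (g :: real \<Rightarrow> real \<Rightarrow> real).
        orthogonal_transformation R \<and> a > 0 \<and>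
        (\<forall>s1 s2 r1 r2. \<bar>g s1 s2 - g r1 r2\<bar> \<le> L * sqrt ((s1 - r1)^2 + (s2 - r2)^2)) \<and>
        (\<forall>x. (\<forall>i::3. \<bar>(R (x - p)) $ i\<bar> < a) \<longrightarrow>
             (x \<in> D \<longleftrightarrow> (R (x - p)) $ 3 < g ((R (x - p)) $ 1) ((R (x - p)) $ 2))))"

definition bounded_lipschitz_domain :: "(real^3) set \<Rightarrow> bool" where
  "bounded_lipschitz_domain D \<longleftrightarrow>
     open D \<and> connected D \<and> D \<noteq> {} \<and> bounded D \<and> lipschitz_boundary D"

definition L2_D :: "(real^3) set \<Rightarrow> real \<Rightarrow> real \<Rightarrow> (((real^3) \<times> real) \<Rightarrow> complex) set" where
  "L2_D D tmin tmax =
     {u. set_borel_measurable lborel (D \<times> {tmin<..<tmax}) u \<and>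
         set_integrable lborel (D \<times> {tmin<..<tmax}) (\<lambda>p. (norm (u p))^2)}"

definition L_op :: "real^3 \<Rightarrow> (real^3) set \<Rightarrow> real \<Rightarrow> real \<Rightarrow> (((real^3) \<times> real) \<Rightarrow> complex) \<Rightarrow> real \<Rightarrow> complex" where
  "L_op xhat D tmin tmax u \<tau> =
     (LINT p:(D \<times> {tmin<..<tmax})|lborel.
        exp (\<i> * complex_of_real (\<tau> * (snd p - xhat \<bullet> fst p))) * u p)"

text \<open>Range of L_D as an operator X_D -> L^2(0,K): equality in L^2(0,K), i.e. a.e. on (0,K).\<close>
definition in_range_L :: "real^3 \<Rightarrow> (real^3) set \<Rightarrow> real \<Rightarrow> real \<Rightarrow> real \<Rightarrow> (real \<Rightarrow> complex) \<Rightarrow> bool" where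
  "in_range_L xhat D tmin tmax K f \<longleftrightarrow>
     (\<exists>u \<in> L2_D D tmin tmax.
        AE \<tau> in lborel. \<tau> \<in> {0<..<K} \<longrightarrow> L_op xhat D tmin tmax u \<tau> = f \<tau>)"

definition test_fun :: "real^3 \<Rightarrow> real \<Rightarrow> real^3 \<Rightarrow> real \<Rightarrow> real \<Rightarrow> real \<Rightarrow> complex" where
  "test_fun xhat tmax y \<eta> \<epsilon> k =
     complex_of_real (1 / ((tmax - \<eta>) * measure lborel (ball y \<epsilon>))) *
     (LINT p:(ball y \<epsilon> \<times> {\<eta><..<tmax})|lborel.
        exp (\<i> * complex_of_real (k * (snd p - xhat \<bullet> fst p))))"

definition strip_K :: "real^3 \<Rightarrow> (real^3) set \<Rightarrow> (real^3) set" where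
  "strip_K xhat D = {y. Inf ((\<lambda>z. xhat \<bullet> z) ` D) < xhat \<bullet> y \<and> xhat \<bullet> y < Sup ((\<lambda>z. xhat \<bullet> z) ` D)}"

definition strip_K_eta :: "real^3 \<Rightarrow> (real^3) set \<Rightarrow> real \<Rightarrow> real \<Rightarrow> (real^3) set" where
  "strip_K_eta xhat D tmin \<eta> =
     {y. Inf ((\<lambda>z. xhat \<bullet> z) ` D) < xhat \<bullet> y \<and> xhat \<bullet> y < Sup ((\<lambda>z. xhat \<bullet> z) ` D) - tmin + \<eta>}"

end

theory Submission
  imports Defs "HOL-Probability.Characteristic_Functions"
begin

definition Lam :: "'a measure \<Rightarrow> ('a \<Rightarrow> real) \<Rightarrow> ('a \<Rightarrow> complex) \<Rightarrow> (real \<Rightarrow> complex) \<Rightarrow> complex" where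
  "Lam M \<sigma> w f = (\<integral>x. f (\<sigma> x) * w x \<partial>M)"

definition good :: "'a measure \<Rightarrow> ('a \<Rightarrow> real) \<Rightarrow> ('a \<Rightarrow> complex) \<Rightarrow> real \<Rightarrow> real \<Rightarrow> bool" where
  "good M \<sigma> w a b \<longleftrightarrow> integrable M w \<and> \<sigma> \<in> borel_measurable M \<and> (\<forall>x\<in>space M. w x \<noteq> 0 \<longrightarrow> \<sigma> x \<in> {a..b})"

lemma cont_bounded_on:
  fixes f :: "real \<Rightarrow> complex"
  assumes "continuous_on UNIV f"
  obtains B where "\<forall>s\<in>{a..b}. norm (f s) \<le> B"
proof -
  have "compact (f ` {a..b})"
    by (rule compact_continuous_image) (use assms continuous_on_subset in auto)
  then obtain B where "\<forall>x\<in>f ` {a..b}. norm x \<le> B"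
    using compact_imp_bounded bounded_iff by metis
  then show ?thesis using that by auto
qed

lemma good_integrable:
  assumes g: "good M \<sigma> w a b" and f: "continuous_on UNIV f"
  shows "integrable M (\<lambda>x. f (\<sigma> x) * w x)"
proof -
  obtain B where B: "\<forall>s\<in>{a..b}. norm (f s) \<le> B" using cont_bounded_on[OF f] by blast
  have iw: "integrable M w" and sm: "\<sigma> \<in> borel_measurable M"
    and sup: "\<forall>x\<in>space M. w x \<noteq> 0 \<longrightarrow> \<sigma> x \<in> {a..b}" using g unfolding good_def by auto
  have fm: "f \<in> borel_measurable borel" using borel_measurable_continuous_onI[OF f] .
  show ?thesis
  proof (rule Bochner_Integration.integrable_bound[of _ "\<lambda>x. B * norm (w x)"])
    show "integrable M (\<lambda>x. B * norm (w x))" using iw by auto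
    show "(\<lambda>x. f (\<sigma> x) * w x) \<in> borel_measurable M"
      using measurable_compose[OF sm fm] borel_measurable_integrable[OF iw] by measurable
    show "AE x in M. norm (f (\<sigma> x) * w x) \<le> norm (B * norm (w x))"
    proof (rule AE_I2)
      fix x assume x: "x \<in> space M"
      show "norm (f (\<sigma> x) * w x) \<le> norm (B * norm (w x))"
      proof (cases "w x = 0")
        case False
        then have "norm (f (\<sigma> x)) \<le> B" using B sup x by auto
        then have "norm (f (\<sigma> x)) * norm (w x) \<le> B * norm (w x)" by (simp add: mult_right_mono)
        then show ?thesis by (simp add: norm_mult)
      qed simp
    qed
  qed
qed

lemma good_bound:
  assumes g: "good M \<sigma> w a b" and f: "continuous_on UNIV f" and B: "\<forall>s\<in>{a..b}. norm (f s) \<le> B"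
  shows "norm (Lam M \<sigma> w f) \<le> B * (\<integral>x. norm (w x) \<partial>M)"
proof -
  have iw: "integrable M w"
    and sup: "\<forall>x\<in>space M. w x \<noteq> 0 \<longrightarrow> \<sigma> x \<in> {a..b}" using g unfolding good_def by auto
  have "norm (Lam M \<sigma> w f) \<le> (\<integral>x. norm (f (\<sigma> x) * w x) \<partial>M)"
    unfolding Lam_def by (rule integral_norm_bound)
  also have "\<dots> \<le> (\<integral>x. B * norm (w x) \<partial>M)"
  proof (rule integral_mono)
    show "integrable M (\<lambda>x. norm (f (\<sigma> x) * w x))" using good_integrable[OF g f] by auto
    show "integrable M (\<lambda>x. B * norm (w x))" using iw by auto
    fix x assume x: "x \<in> space M"
    show "norm (f (\<sigma> x) * w x) \<le> B * norm (w x)"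
    proof (cases "w x = 0")
      case False
      then have "norm (f (\<sigma> x)) \<le> B" using B sup x by auto
      then have "norm (f (\<sigma> x)) * norm (w x) \<le> B * norm (w x)" by (simp add: mult_right_mono)
      then show ?thesis by (simp add: norm_mult)
    qed simp
  qed
  also have "\<dots> = B * (\<integral>x. norm (w x) \<partial>M)" by simp
  finally show ?thesis .
qed

lemma Lam_diff:
  assumes g: "good M \<sigma> w a b" and f: "continuous_on UNIV f" and h: "continuous_on UNIV h"
  shows "Lam M \<sigma> w (\<lambda>s. f s - h s) = Lam M \<sigma> w f - Lam M \<sigma> w h"
  unfolding Lam_def using good_integrable[OF g f] good_integrable[OF g h]
  by (simp add: left_diff_distrib)

lemma Lam_cmult:
  shows "Lam M \<sigma> w (\<lambda>s. c * f s) = c * Lam M \<sigma> w f"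
  unfolding Lam_def by (simp add: mult.assoc)

lemma Lam_sum:
  assumes g: "good M \<sigma> w a b" and f: "\<And>i. i \<in> I \<Longrightarrow> continuous_on UNIV (f i)"
  shows "Lam M \<sigma> w (\<lambda>s. \<Sum>i\<in>I. f i s) = (\<Sum>i\<in>I. Lam M \<sigma> w (f i))"
  unfolding Lam_def using good_integrable[OF g f]
  by (simp add: sum_distrib_right)



lemma small_le:
  fixes x A d :: real
  assumes "d > 0" "\<And>h. 0 < h \<Longrightarrow> h < d \<Longrightarrow> x \<le> A * h"
  shows "x \<le> 0"
proof (rule ccontr)
  assume x: "\<not> x \<le> 0"
  show False
  proof (cases "A \<le> 0")
    case True
    have "x \<le> A * (d/2)" using assms(2)[of "d/2"] assms(1) by auto
    also have "\<dots> \<le> 0" using True assms by (simp add: mult_nonpos_nonneg)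
    finally show False using x by simp
  next
    case False
    define h where "h = min (d/2) (x / (2*A))"
    have h0: "0 < h" "h < d" using False x assms by (auto simp: h_def)
    have "A * h \<le> A * (x / (2*A))" using False by (intro mult_left_mono) (auto simp: h_def)
    also have "\<dots> = x/2" using False by simp
    finally show False using assms(2)[OF h0] x by simp
  qed
qed

lemma iexp_mult_add: "iexp ((t + h) * s) = iexp (t * s) * iexp (h * s)"
  by (simp add: ring_distribs exp_add)

lemma iexp_bound1: "cmod (iexp x - 1) \<le> \<bar>x\<bar>"
  using iexp_approx1[of x 0] by simp

lemma iexp_bound2: "cmod (iexp x - (1 + \<i> * complex_of_real x)) \<le> x^2 / 2"
  using iexp_approx1[of x 1] by (simp add: numeral_2_eq_2 power2_abs)

locale twog =
  fixes M1 :: "'a measure" and \<sigma>1 w1 and M2 :: "'b measure" and \<sigma>2 w2 and a b :: real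
  assumes g1: "good M1 \<sigma>1 w1 a b" and g2: "good M2 \<sigma>2 w2 a b"
begin

definition "Dl f = Lam M1 \<sigma>1 w1 f - Lam M2 \<sigma>2 w2 f"
definition "CC = (\<integral>x. norm (w1 x) \<partial>M1) + (\<integral>x. norm (w2 x) \<partial>M2)"
definition "RR = max \<bar>a\<bar> \<bar>b\<bar>"

lemma CC_nonneg: "CC \<ge> 0" unfolding CC_def by (intro add_nonneg_nonneg integral_nonneg_AE) auto
lemma RR: "s \<in> {a..b} \<Longrightarrow> \<bar>s\<bar> \<le> RR" unfolding RR_def by auto
lemma RR_nonneg: "RR \<ge> 0" unfolding RR_def by auto

lemma D_bound:
  assumes f: "continuous_on UNIV f" and B: "\<forall>s\<in>{a..b}. norm (f s) \<le> B"
  shows "norm (Dl f) \<le> B * CC"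
proof -
  have "norm (Dl f) \<le> norm (Lam M1 \<sigma>1 w1 f) + norm (Lam M2 \<sigma>2 w2 f)"
    unfolding Dl_def by (rule norm_triangle_ineq4)
  also have "\<dots> \<le> B * (\<integral>x. norm (w1 x) \<partial>M1) + B * (\<integral>x. norm (w2 x) \<partial>M2)"
    using good_bound[OF g1 f B] good_bound[OF g2 f B] by linarith
  finally show ?thesis by (simp add: CC_def distrib_left)
qed

lemma D_diff:
  assumes f: "continuous_on UNIV f" and h: "continuous_on UNIV h"
  shows "Dl (\<lambda>s. f s - h s) = Dl f - Dl h"
  unfolding Dl_def using Lam_diff[OF g1 f h] Lam_diff[OF g2 f h] by simp

lemma D_cmult: "Dl (\<lambda>s. c * f s) = c * Dl f"
  unfolding Dl_def Lam_cmult by (simp add: right_diff_distrib)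

lemma D_sum:
  assumes "\<And>i. i \<in> I \<Longrightarrow> continuous_on UNIV (f i)"
  shows "Dl (\<lambda>s. \<Sum>i\<in>I. f i s) = (\<Sum>i\<in>I. Dl (f i))"
proof -
  have l1: "Lam M1 \<sigma>1 w1 (\<lambda>s. \<Sum>i\<in>I. f i s) = (\<Sum>i\<in>I. Lam M1 \<sigma>1 w1 (f i))"
    by (rule Lam_sum[OF g1]) (rule assms)
  have l2: "Lam M2 \<sigma>2 w2 (\<lambda>s. \<Sum>i\<in>I. f i s) = (\<Sum>i\<in>I. Lam M2 \<sigma>2 w2 (f i))"
    by (rule Lam_sum[OF g2]) (rule assms)
  show ?thesis unfolding Dl_def l1 l2 by (simp add: sum_subtractf)
qed

lemma step_exp:
  assumes K: "K > 0" and H: "\<forall>\<tau>\<in>{0<..<K}. Dl (\<lambda>s. iexp (\<tau> * s)) = 0"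
  shows "\<forall>\<tau>\<in>{0<..<K}. Dl (\<lambda>s. complex_of_real s ^ n * iexp (\<tau> * s)) = 0"
proof (induction n)
  case 0
  then show ?case using H by simp
next
  case (Suc n)
  show ?case
  proof
    fix \<tau> :: real assume \<tau>: "\<tau> \<in> {0<..<K}"
    define X where "X = Dl (\<lambda>s. complex_of_real s ^ Suc n * iexp (\<tau> * s))"
    have "norm X \<le> 0"
    proof (rule small_le[of "K - \<tau>" _ "CC * RR^(n+2) / 2"])
      show "0 < K - \<tau>" using \<tau> by auto
      fix h :: real assume h: "0 < h" "h < K - \<tau>"
      have th: "\<tau> + h \<in> {0<..<K}" using h \<tau> by auto
      define q where "q s = complex_of_real s ^ n * iexp ((\<tau> + h) * s) - complex_of_real s ^ n * iexp (\<tau> * s)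
          - (complex_of_real h * \<i>) * (complex_of_real s ^ Suc n * iexp (\<tau> * s))" for s
      have c1: "continuous_on UNIV (\<lambda>s. complex_of_real s ^ n * iexp ((\<tau> + h) * s))"
        by (intro continuous_intros)
      have c2: "continuous_on UNIV (\<lambda>s. complex_of_real s ^ n * iexp (\<tau> * s))"
        by (intro continuous_intros)
      have c3: "continuous_on UNIV (\<lambda>s. (complex_of_real h * \<i>) * (complex_of_real s ^ Suc n * iexp (\<tau> * s)))"
        by (intro continuous_intros)
      have c12: "continuous_on UNIV (\<lambda>s. complex_of_real s ^ n * iexp ((\<tau> + h) * s) - complex_of_real s ^ n * iexp (\<tau> * s))"
        by (intro continuous_intros)
      have "Dl q = Dl (\<lambda>s. complex_of_real s ^ n * iexp ((\<tau> + h) * s) - complex_of_real s ^ n * iexp (\<tau> * s))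
          - Dl (\<lambda>s. (complex_of_real h * \<i>) * (complex_of_real s ^ Suc n * iexp (\<tau> * s)))"
        unfolding q_def by (rule D_diff[OF c12 c3])
      also have "\<dots> = - (complex_of_real h * \<i>) * X"
        unfolding D_diff[OF c1 c2] D_cmult X_def Suc.IH[rule_format, OF th] Suc.IH[rule_format, OF \<tau>] by simp
      finally have Dq: "norm (Dl q) = h * norm X" using h by (simp add: norm_mult)
      have cq: "continuous_on UNIV q" unfolding q_def by (intro continuous_intros)
      have qb: "\<forall>s\<in>{a..b}. norm (q s) \<le> RR^(n+2) * h^2 / 2"
      proof
        fix s :: real assume s: "s \<in> {a..b}"
        have "q s = complex_of_real s ^ n * iexp (\<tau> * s) * (iexp (h * s) - (1 + \<i> * complex_of_real (h * s)))"
          unfolding q_def iexp_mult_add by (simp add: algebra_simps)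
        then have "norm (q s) = \<bar>s\<bar>^n * cmod (iexp (h * s) - (1 + \<i> * complex_of_real (h * s)))"
          by (simp add: norm_mult norm_power)
        also have "\<dots> \<le> RR^n * ((h * s)^2 / 2)"
          using RR[OF s] by (intro mult_mono power_mono iexp_bound2) auto
        also have "\<dots> = RR^n * (h^2 * s^2) / 2" by (simp add: power_mult_distrib)
        also have "\<dots> \<le> RR^n * (h^2 * RR^2) / 2"
          using RR[OF s] RR_nonneg
          by (intro divide_right_mono mult_left_mono) (auto simp: power2_le_iff_abs_le)
        also have "\<dots> = RR^(n+2) * h^2 / 2" by (simp add: power_add power2_eq_square)
        finally show "norm (q s) \<le> RR^(n+2) * h^2 / 2" .
      qed
      have "h * norm X \<le> RR^(n+2) * h^2 / 2 * CC" using D_bound[OF cq qb] Dq by simp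
      then have "h * norm X \<le> h * (CC * RR^(n+2) / 2 * h)" by (simp add: power2_eq_square algebra_simps)
      then show "norm X \<le> CC * RR ^ (n + 2) / 2 * h" using h by simp
    qed
    then show "Dl (\<lambda>s. complex_of_real s ^ Suc n * iexp (\<tau> * s)) = 0" unfolding X_def by simp
  qed
qed


lemma step_pow:
  assumes K: "K > 0" and H: "\<forall>\<tau>\<in>{0<..<K}. Dl (\<lambda>s. iexp (\<tau> * s)) = 0"
  shows "Dl (\<lambda>s. complex_of_real s ^ n) = 0"
proof -
  have "norm (Dl (\<lambda>s. complex_of_real s ^ n)) \<le> 0"
  proof (rule small_le[of K _ "CC * RR^(n+1)"])
    show "0 < K" by fact
    fix \<tau> :: real assume t: "0 < \<tau>" "\<tau> < K"
    define q where "q s = complex_of_real s ^ n - complex_of_real s ^ n * iexp (\<tau> * s)" for s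
    have c1: "continuous_on UNIV (\<lambda>s. complex_of_real s ^ n)" by (intro continuous_intros)
    have c2: "continuous_on UNIV (\<lambda>s. complex_of_real s ^ n * iexp (\<tau> * s))" by (intro continuous_intros)
    have Dq: "Dl q = Dl (\<lambda>s. complex_of_real s ^ n)"
      unfolding q_def D_diff[OF c1 c2] using step_exp[OF K H] t by simp
    have cq: "continuous_on UNIV q" unfolding q_def by (intro continuous_intros)
    have qb: "\<forall>s\<in>{a..b}. norm (q s) \<le> RR^(n+1) * \<tau>"
    proof
      fix s :: real assume s: "s \<in> {a..b}"
      have "q s = - (complex_of_real s ^ n * (iexp (\<tau> * s) - 1))"
        unfolding q_def by (simp add: algebra_simps)
      then have "norm (q s) = \<bar>s\<bar>^n * cmod (iexp (\<tau> * s) - 1)"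
        by (simp add: norm_mult norm_power)
      also have "\<dots> \<le> RR^n * \<bar>\<tau> * s\<bar>"
        using RR[OF s] by (intro mult_mono power_mono iexp_bound1) auto
      also have "\<dots> = RR^n * (\<tau> * \<bar>s\<bar>)" using t by (simp add: abs_mult)
      also have "\<dots> \<le> RR^n * (\<tau> * RR)"
        using RR[OF s] RR_nonneg t by (intro mult_left_mono) auto
      also have "\<dots> = RR^(n+1) * \<tau>" by (simp add: algebra_simps)
      finally show "norm (q s) \<le> RR^(n+1) * \<tau>" .
    qed
    show "norm (Dl (\<lambda>s. complex_of_real s ^ n)) \<le> CC * RR ^ (n + 1) * \<tau>"
      using D_bound[OF cq qb] Dq by (simp add: algebra_simps)
  qed
  then show ?thesis by simp
qed

lemma step_poly:
  assumes K: "K > 0" and H: "\<forall>\<tau>\<in>{0<..<K}. Dl (\<lambda>s. iexp (\<tau> * s)) = 0"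
  shows "Dl (\<lambda>s. complex_of_real (\<Sum>i\<le>N. c i * s^i)) = 0"
proof -
  have "Dl (\<lambda>s. complex_of_real (\<Sum>i\<le>N. c i * s^i)) = Dl (\<lambda>s. \<Sum>i\<le>N. complex_of_real (c i) * complex_of_real s ^ i)"
    by simp
  also have "\<dots> = (\<Sum>i\<le>N. Dl (\<lambda>s. complex_of_real (c i) * complex_of_real s ^ i))"
    by (rule D_sum) (intro continuous_intros)
  also have "\<dots> = 0" unfolding D_cmult step_pow[OF K H] by simp
  finally show ?thesis .
qed

lemma step_cont:
  assumes K: "K > 0" and H: "\<forall>\<tau>\<in>{0<..<K}. Dl (\<lambda>s. iexp (\<tau> * s)) = 0"
    and phi: "continuous_on UNIV \<phi>"
  shows "Dl (\<lambda>s. complex_of_real (\<phi> s)) = 0"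
proof -
  have "norm (Dl (\<lambda>s. complex_of_real (\<phi> s))) \<le> 0"
  proof (rule small_le[of 1 _ CC])
    show "(0::real) < 1" by simp
    fix e :: real assume e: "0 < e" "e < 1"
    have "continuous_on {a..b} \<phi>" using phi continuous_on_subset by blast
    then obtain g where g: "polynomial_function g" "\<forall>x\<in>{a..b}. norm (\<phi> x - g x) < e"
      using Stone_Weierstrass_polynomial_function[of "{a..b}" \<phi> e] e by auto
    then obtain c N where gN: "g = (\<lambda>x. \<Sum>i\<le>N. c i * x^i)"
      using real_polynomial_function_iff_sum real_polynomial_function_eq by metis
    have c1: "continuous_on UNIV (\<lambda>s. complex_of_real (\<phi> s))" by (intro continuous_intros phi)
    have c2: "continuous_on UNIV (\<lambda>s. complex_of_real (g s))" unfolding gN by (intro continuous_intros)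
    have "Dl (\<lambda>s. complex_of_real (\<phi> s) - complex_of_real (g s)) = Dl (\<lambda>s. complex_of_real (\<phi> s))"
    proof -
      have "Dl (\<lambda>s. complex_of_real (g s)) = 0" unfolding gN by (rule step_poly[OF K H])
      then show ?thesis using D_diff[OF c1 c2] by simp
    qed
    moreover have "norm (Dl (\<lambda>s. complex_of_real (\<phi> s) - complex_of_real (g s))) \<le> e * CC"
      by (rule D_bound) (use c1 c2 g(2) in \<open>auto intro!: continuous_intros simp flip: of_real_diff intro: less_imp_le\<close>)
    ultimately show "norm (Dl (\<lambda>s. complex_of_real (\<phi> s))) \<le> CC * e" by (simp add: mult.commute)
  qed
  then show ?thesis by simp
qed

lemma G_lip:
  "norm (Dl (\<lambda>s. iexp (\<tau> * s)) - Dl (\<lambda>s. iexp (\<tau>' * s))) \<le> CC * RR * \<bar>\<tau> - \<tau>'\<bar>"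
proof -
  have c1: "continuous_on UNIV (\<lambda>s. iexp (\<tau> * s))" by (intro continuous_intros)
  have c2: "continuous_on UNIV (\<lambda>s. iexp (\<tau>' * s))" by (intro continuous_intros)
  have cq: "continuous_on UNIV (\<lambda>s. iexp (\<tau> * s) - iexp (\<tau>' * s))" by (intro continuous_intros)
  have qb: "\<forall>s\<in>{a..b}. norm (iexp (\<tau> * s) - iexp (\<tau>' * s)) \<le> RR * \<bar>\<tau> - \<tau>'\<bar>"
  proof
    fix s :: real assume s: "s \<in> {a..b}"
    have "iexp (\<tau> * s) - iexp (\<tau>' * s) = iexp (\<tau>' * s) * (iexp ((\<tau> - \<tau>') * s) - 1)"
      using iexp_mult_add[of \<tau>' "\<tau> - \<tau>'" s] by (simp add: algebra_simps)
    then have "norm (iexp (\<tau> * s) - iexp (\<tau>' * s)) = cmod (iexp ((\<tau> - \<tau>') * s) - 1)"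
      by (simp add: norm_mult)
    also have "\<dots> \<le> \<bar>(\<tau> - \<tau>') * s\<bar>" by (rule iexp_bound1)
    also have "\<dots> \<le> RR * \<bar>\<tau> - \<tau>'\<bar>" using RR[OF s] mult_right_mono[OF RR[OF s], of "\<bar>\<tau> - \<tau>'\<bar>"] by (simp add: abs_mult mult.commute)
    finally show "norm (iexp (\<tau> * s) - iexp (\<tau>' * s)) \<le> RR * \<bar>\<tau> - \<tau>'\<bar>" .
  qed
  show ?thesis using D_bound[OF cq qb] unfolding D_diff[OF c1 c2] by (simp add: algebra_simps)
qed

lemma AE_to_all:
  assumes AE: "AE \<tau> in lborel. \<tau> \<in> {0<..<K} \<longrightarrow> Dl (\<lambda>s. iexp (\<tau> * s)) = 0"
  shows "\<forall>\<tau>\<in>{0<..<K}. Dl (\<lambda>s. iexp (\<tau> * s)) = 0"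
proof (rule ccontr)
  assume "\<not> ?thesis"
  then obtain \<tau>0 where t0: "\<tau>0 \<in> {0<..<K}" "Dl (\<lambda>s. iexp (\<tau>0 * s)) \<noteq> 0" by auto
  define v where "v = norm (Dl (\<lambda>s. iexp (\<tau>0 * s)))"
  have v: "v > 0" using t0 by (simp add: v_def)
  define \<delta> where "\<delta> = min (min \<tau>0 (K - \<tau>0)) (v / (CC * RR + 1))"
  have CR: "CC * RR \<ge> 0" using CC_nonneg RR_nonneg by simp
  have d0: "\<delta> > 0" using t0 v CR by (auto simp: \<delta>_def)
  have sub: "{\<tau>0 - \<delta> <..< \<tau>0 + \<delta>} \<subseteq> {\<tau>. \<not> (\<tau> \<in> {0<..<K} \<longrightarrow> Dl (\<lambda>s. iexp (\<tau> * s)) = 0)}"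
  proof
    fix \<tau> assume \<tau>: "\<tau> \<in> {\<tau>0 - \<delta> <..< \<tau>0 + \<delta>}"
    have inK: "\<tau> \<in> {0<..<K}" using \<tau> t0 by (auto simp: \<delta>_def)
    have "\<bar>\<tau> - \<tau>0\<bar> < \<delta>" using \<tau> by auto
    then have "CC * RR * \<bar>\<tau> - \<tau>0\<bar> \<le> CC * RR * \<delta>" using CR by (intro mult_left_mono) auto
    also have "\<dots> \<le> CC * RR * (v / (CC * RR + 1))" using CR by (intro mult_left_mono) (auto simp: \<delta>_def)
    also have "\<dots> < v" using v CR by (simp add: field_simps)
    finally have lt: "CC * RR * \<bar>\<tau> - \<tau>0\<bar> < v" .
    have "v \<le> norm (Dl (\<lambda>s. iexp (\<tau> * s))) + norm (Dl (\<lambda>s. iexp (\<tau> * s)) - Dl (\<lambda>s. iexp (\<tau>0 * s)))"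
      unfolding v_def by (metis norm_minus_commute norm_triangle_sub add.commute)
    then have "Dl (\<lambda>s. iexp (\<tau> * s)) \<noteq> 0" using G_lip[of \<tau> \<tau>0] lt by auto
    then show "\<tau> \<in> {\<tau>. \<not> (\<tau> \<in> {0<..<K} \<longrightarrow> Dl (\<lambda>s. iexp (\<tau> * s)) = 0)}" using inK by simp
  qed
  from AE obtain N where N: "{x \<in> space lborel. \<not> (x \<in> {0<..<K} \<longrightarrow> Dl (\<lambda>s. iexp (x * s)) = 0)} \<subseteq> N"
    "emeasure lborel N = 0" "N \<in> sets lborel" by (rule AE_E)
  have "emeasure lborel {\<tau>0 - \<delta> <..< \<tau>0 + \<delta>} \<le> emeasure lborel N"
    using sub N by (intro emeasure_mono) auto
  then show False using N d0 by simp
qed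

lemma uniqueness:
  assumes K: "K > 0" and AE: "AE \<tau> in lborel. \<tau> \<in> {0<..<K} \<longrightarrow> Dl (\<lambda>s. iexp (\<tau> * s)) = 0"
    and phi: "continuous_on UNIV \<phi>"
  shows "Lam M1 \<sigma>1 w1 (\<lambda>s. complex_of_real (\<phi> s)) = Lam M2 \<sigma>2 w2 (\<lambda>s. complex_of_real (\<phi> s))"
  using step_cont[OF K AE_to_all[OF AE] phi] unfolding Dl_def by simp

end


lemma open_pos:
  fixes U :: "'a::euclidean_space set"
  assumes "open U" "x \<in> U"
  shows "emeasure lborel U > 0"
proof -
  obtain a b where ab: "box a b \<subseteq> U" "x \<in> box a b" "\<forall>i\<in>Basis. a \<bullet> i < b \<bullet> i"
    using open_contains_box[OF assms] by blast
  have "emeasure lborel (box a b) = (\<Prod>i\<in>Basis. (b - a) \<bullet> i)"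
    using ab(3) by (simp add: emeasure_lborel_box_eq less_imp_le)
  moreover have "(\<Prod>i\<in>Basis. (b - a) \<bullet> i) > 0"
    using ab(3) by (intro prod_pos) (auto simp: inner_diff_left)
  ultimately have "emeasure lborel (box a b) > 0" by simp
  also have "emeasure lborel (box a b) \<le> emeasure lborel U"
    using ab assms by (intro emeasure_mono) auto
  finally show ?thesis .
qed

lemma integral_pos_open:
  fixes g :: "'a::euclidean_space \<Rightarrow> real"
  assumes int: "integrable lborel g" and nn: "\<And>p. g p \<ge> 0"
    and U: "open U" "x \<in> U" and pos: "\<And>p. p \<in> U \<Longrightarrow> g p > 0"
  shows "integral\<^sup>L lborel g > 0"
proof -
  have ge: "integral\<^sup>L lborel g \<ge> 0" using nn by (simp add: integral_nonneg_AE)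
  have "integral\<^sup>L lborel g \<noteq> 0"
  proof
    assume "integral\<^sup>L lborel g = 0"
    then have "AE p in lborel. g p = 0" using integral_nonneg_eq_0_iff_AE[OF int] nn by simp
    then obtain N where N: "{p \<in> space lborel. \<not> g p = 0} \<subseteq> N" "emeasure lborel N = 0" "N \<in> sets lborel"
      by (rule AE_E)
    have "U \<subseteq> N" using N(1) pos by fastforce
    then have "emeasure lborel U \<le> emeasure lborel N" using N by (intro emeasure_mono) auto
    then show False using open_pos[OF U] N by simp
  qed
  then show ?thesis using ge by simp
qed

lemma measure_ball_pos:
  fixes y :: "'a::euclidean_space"
  assumes "\<epsilon> > 0" shows "measure lborel (ball y \<epsilon>) > 0"
proof -
  have "emeasure lborel (ball y \<epsilon>) > 0" using open_pos[of "ball y \<epsilon>" y] assms by simp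
  moreover have "emeasure lborel (ball y \<epsilon>) < \<infinity>" by (rule emeasure_lborel_ball_finite)
  ultimately show ?thesis by (simp add: measure_def enn2real_positive_iff)
qed

lemma inner_bound_D:
  fixes D :: "(real^3) set" and xhat :: "real^3"
  assumes "bounded D" "norm xhat = 1"
  obtains R where "R \<ge> 0" "\<And>z. z \<in> D \<Longrightarrow> norm z \<le> R" "\<And>z. z \<in> D \<Longrightarrow> \<bar>xhat \<bullet> z\<bar> \<le> R"
proof -
  obtain R0 where R0: "\<forall>z\<in>D. norm z \<le> R0" using assms(1) bounded_iff by metis
  define R where "R = max R0 0"
  have "\<bar>xhat \<bullet> z\<bar> \<le> R" if "z \<in> D" for z
    using Cauchy_Schwarz_ineq2[of xhat z] assms(2) R0 that by (auto simp: R_def)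
  then show ?thesis using R0 by (intro that[of R]) (auto simp: R_def)
qed

lemma inf_sup_D:
  fixes D :: "(real^3) set" and xhat :: "real^3"
  assumes "bounded D" "norm xhat = 1" "z \<in> D"
  shows "Inf ((\<lambda>z. xhat \<bullet> z) ` D) \<le> xhat \<bullet> z" "xhat \<bullet> z \<le> Sup ((\<lambda>z. xhat \<bullet> z) ` D)"
proof -
  obtain R where R: "\<And>z. z \<in> D \<Longrightarrow> \<bar>xhat \<bullet> z\<bar> \<le> R" using inner_bound_D[OF assms(1,2)] by metis
  have "bdd_below ((\<lambda>z. xhat \<bullet> z) ` D)" by (rule bdd_belowI[of _ "-R"]) (use R in force)
  then show "Inf ((\<lambda>z. xhat \<bullet> z) ` D) \<le> xhat \<bullet> z" using assms(3) by (auto intro: cInf_lower)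
  have "bdd_above ((\<lambda>z. xhat \<bullet> z) ` D)" by (rule bdd_aboveI[of _ "R"]) (use R in force)
  then show "xhat \<bullet> z \<le> Sup ((\<lambda>z. xhat \<bullet> z) ` D)" using assms(3) by (auto intro: cSup_upper)
qed

lemma inf_less_sup_D:
  fixes D :: "(real^3) set" and xhat :: "real^3"
  assumes "bounded D" "norm xhat = 1" "open D" "D \<noteq> {}"
  shows "Inf ((\<lambda>z. xhat \<bullet> z) ` D) < Sup ((\<lambda>z. xhat \<bullet> z) ` D)"
proof -
  obtain z where z: "z \<in> D" using assms(4) by blast
  obtain r where r: "r > 0" "ball z r \<subseteq> D" using assms(3) z openE by blast
  have "z + (r/2) *\<^sub>R xhat \<in> ball z r" using r assms(2) by (simp add: dist_norm)
  then have z2: "z + (r/2) *\<^sub>R xhat \<in> D" using r by blast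
  have xx: "xhat \<bullet> xhat = 1" using assms(2) by (simp add: norm_eq_sqrt_inner)
  have "Inf ((\<lambda>z. xhat \<bullet> z) ` D) \<le> xhat \<bullet> z" using inf_sup_D[OF assms(1,2) z] by simp
  also have "\<dots> < xhat \<bullet> (z + (r/2) *\<^sub>R xhat)" using r xx by (simp add: inner_add_right)
  also have "\<dots> \<le> Sup ((\<lambda>z. xhat \<bullet> z) ` D)" using inf_sup_D[OF assms(1,2) z2] by simp
  finally show ?thesis .
qed

lemma strip_point:
  fixes D :: "(real^3) set" and xhat :: "real^3"
  assumes "bounded D" "norm xhat = 1" "connected D" "y \<in> strip_K xhat D" "D \<noteq> {}"
  obtains z where "z \<in> D" "xhat \<bullet> z = xhat \<bullet> y"
proof -
  let ?I = "(\<lambda>z. xhat \<bullet> z) ` D"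
  have y: "Inf ?I < xhat \<bullet> y" "xhat \<bullet> y < Sup ?I" using assms(4) by (auto simp: strip_K_def)
  have ne: "?I \<noteq> {}" using assms(5) by simp
  obtain R where R: "\<And>z. z \<in> D \<Longrightarrow> \<bar>xhat \<bullet> z\<bar> \<le> R" using inner_bound_D[OF assms(1,2)] by metis
  have bb: "bdd_below ?I" by (rule bdd_belowI[of _ "-R"]) (use R in force)
  have ba: "bdd_above ?I" by (rule bdd_aboveI[of _ "R"]) (use R in force)
  obtain v1 where v1: "v1 \<in> ?I" "v1 < xhat \<bullet> y" using y(1) cInf_less_iff[OF ne bb] by blast
  obtain v2 where v2: "v2 \<in> ?I" "xhat \<bullet> y < v2" using y(2) less_cSup_iff[OF ne ba] by blast
  have "connected ?I" by (intro connected_continuous_image assms(3) continuous_intros)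
  then have "is_interval ?I" using is_interval_connected_1 by blast
  then have "xhat \<bullet> y \<in> ?I" using v1 v2 unfolding is_interval_1 by (meson less_imp_le)
  then show ?thesis using that by auto
qed

lemma not_closure_strip:
  fixes D :: "(real^3) set" and xhat :: "real^3"
  assumes "bounded D" "norm xhat = 1" "open D" "D \<noteq> {}" "tmin \<le> \<eta>"
    and ny: "y \<notin> closure (strip_K_eta xhat D tmin \<eta>)"
  shows "xhat \<bullet> y < Inf ((\<lambda>z. xhat \<bullet> z) ` D) \<or> xhat \<bullet> y > Sup ((\<lambda>z. xhat \<bullet> z) ` D) - tmin + \<eta>"
proof (rule ccontr)
  define m where "m = Inf ((\<lambda>z. xhat \<bullet> z) ` D)"
  define M where "M = Sup ((\<lambda>z. xhat \<bullet> z) ` D) - tmin + \<eta>"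
  assume "\<not> ?thesis"
  then have yi: "m \<le> xhat \<bullet> y" "xhat \<bullet> y \<le> M" by (auto simp: m_def M_def)
  have mM: "m < M" using inf_less_sup_D[OF assms(1-4)] assms(5) by (simp add: m_def M_def)
  have xx: "xhat \<bullet> xhat = 1" using assms(2) by (simp add: norm_eq_sqrt_inner)
  define c where "c = (m + M) / 2"
  have "y \<in> closure (strip_K_eta xhat D tmin \<eta>)"
    unfolding closure_approachable
  proof (intro allI impI)
    fix e :: real assume e: "e > 0"
    define l where "l = min (1/2) (e / (\<bar>c - xhat \<bullet> y\<bar> + 1))"
    have l: "0 < l" "l \<le> 1/2" using e by (auto simp: l_def min_def)
    define y' where "y' = y + (l * (c - xhat \<bullet> y)) *\<^sub>R xhat"
    have iy: "xhat \<bullet> y' = (1 - l) * (xhat \<bullet> y) + l * c"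
      unfolding y'_def using xx by (simp add: inner_add_right algebra_simps)
    have c1: "m < c" "c < M" using mM by (auto simp: c_def)
    have a1: "(1 - l) * m \<le> (1 - l) * (xhat \<bullet> y)" "(1 - l) * (xhat \<bullet> y) \<le> (1 - l) * M"
      using yi l by (auto intro: mult_left_mono)
    have a2: "l * m < l * c" "l * c < l * M" using c1 l by auto
    have "m < xhat \<bullet> y'" unfolding iy using a1 a2 by (simp add: algebra_simps)
    moreover have "xhat \<bullet> y' < M" unfolding iy using a1 a2 by (simp add: algebra_simps)
    ultimately have "y' \<in> strip_K_eta xhat D tmin \<eta>" by (simp add: strip_K_eta_def m_def M_def)
    moreover have "dist y' y < e"
    proof -
      have "dist y' y = l * \<bar>c - xhat \<bullet> y\<bar>" using l assms(2) by (simp add: y'_def dist_norm abs_mult)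
      also have "\<dots> \<le> (e / (\<bar>c - xhat \<bullet> y\<bar> + 1)) * \<bar>c - xhat \<bullet> y\<bar>"
        by (intro mult_right_mono) (auto simp: l_def)
      also have "\<dots> < e" using e by (simp add: field_simps)
      finally show ?thesis .
    qed
    ultimately show "\<exists>y'\<in>strip_K_eta xhat D tmin \<eta>. dist y' y < e" by blast
  qed
  then show False using ny by simp
qed



definition sig :: "real^3 \<Rightarrow> (real^3) \<times> real \<Rightarrow> real" where
  "sig xhat p = snd p - xhat \<bullet> fst p"

lemma sig_cont: "continuous_on UNIV (sig xhat)"
  unfolding sig_def by (intro continuous_intros)

lemma sig_meas: "sig xhat \<in> borel_measurable lborel"
  using borel_measurable_continuous_onI[OF sig_cont] by (simp add: measurable_lborel1)

lemma open_sets_lborel: "open (A :: ('a::euclidean_space) set) \<Longrightarrow> A \<in> sets lborel"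
  by simp

lemma bounded_fin: "bounded (A :: ('a::euclidean_space) set) \<Longrightarrow> emeasure lborel A < \<infinity>"
  by (rule emeasure_bounded_finite)

lemma le1sq: "(x::real) \<le> 1 + x^2"
proof -
  have "0 \<le> (x - 1/2)^2" by simp
  then have "0 \<le> x * x - x + 1/4" by (simp add: power2_eq_square algebra_simps)
  then show ?thesis by (simp add: power2_eq_square)
qed

lemma L2_integrable:
  assumes u: "u \<in> L2_D D tmin tmax" and D: "bounded D" "open D"
  shows "integrable lborel (\<lambda>p. indicator (D \<times> {tmin<..<tmax}) p *\<^sub>R u p)"
proof -
  let ?S = "D \<times> {tmin<..<tmax}"
  have Ssets: "?S \<in> sets lborel" using D by (simp add: open_Times)
  have Sfin: "emeasure lborel ?S < \<infinity>" using D by (intro bounded_fin bounded_Times) auto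
  have m: "(\<lambda>p. indicator ?S p *\<^sub>R u p) \<in> borel_measurable lborel"
   and i2: "integrable lborel (\<lambda>p. indicator ?S p *\<^sub>R (norm (u p))^2)"
    using u unfolding L2_D_def set_borel_measurable_def set_integrable_def by auto
  show ?thesis
  proof (rule Bochner_Integration.integrable_bound[OF _ m])
    show "integrable lborel (\<lambda>p. indicator ?S p + indicator ?S p *\<^sub>R (norm (u p))^2)"
      using i2 Ssets Sfin by (intro Bochner_Integration.integrable_add) auto
    show "AE x in lborel. norm (indicator ?S x *\<^sub>R u x) \<le> norm (indicator ?S x + indicator ?S x *\<^sub>R (norm (u x))^2)"
    proof (rule AE_I2)
      fix x
      have "norm (u x) \<le> 1 + (norm (u x))^2" by (rule le1sq)
      then show "norm (indicator ?S x *\<^sub>R u x) \<le> norm (indicator ?S x + indicator ?S x *\<^sub>R (norm (u x))^2)"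
        by (auto simp: indicator_def)
    qed
  qed
qed

lemma L_op_Lam:
  "L_op xhat D tmin tmax u \<tau> = Lam lborel (sig xhat) (\<lambda>p. indicator (D \<times> {tmin<..<tmax}) p *\<^sub>R u p) (\<lambda>s. iexp (\<tau> * s))"
  unfolding L_op_def Lam_def set_lebesgue_integral_def sig_def
  by (intro Bochner_Integration.integral_cong) (auto simp: indicator_def)

lemma test_fun_Lam:
  "test_fun xhat tmax y \<eta> \<epsilon> \<tau> = Lam lborel (sig xhat)
     (\<lambda>p. complex_of_real (1 / ((tmax - \<eta>) * measure lborel (ball y \<epsilon>)) * indicator (ball y \<epsilon> \<times> {\<eta><..<tmax}) p))
     (\<lambda>s. iexp (\<tau> * s))"
proof -
  let ?c = "complex_of_real (1 / ((tmax - \<eta>) * measure lborel (ball y \<epsilon>)))"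
  have "Lam lborel (sig xhat)
     (\<lambda>p. complex_of_real (1 / ((tmax - \<eta>) * measure lborel (ball y \<epsilon>)) * indicator (ball y \<epsilon> \<times> {\<eta><..<tmax}) p))
     (\<lambda>s. iexp (\<tau> * s)) = (\<integral>p. ?c * (indicator (ball y \<epsilon> \<times> {\<eta><..<tmax}) p *\<^sub>R iexp (\<tau> * sig xhat p)) \<partial>lborel)"
    unfolding Lam_def by (intro Bochner_Integration.integral_cong) (auto simp: indicator_def)
  also have "\<dots> = ?c * (\<integral>p. indicator (ball y \<epsilon> \<times> {\<eta><..<tmax}) p *\<^sub>R iexp (\<tau> * sig xhat p) \<partial>lborel)"
    by (rule integral_mult_right_zero)
  finally show ?thesis unfolding test_fun_def set_lebesgue_integral_def sig_def by simp
qed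



lemma part2:
  fixes D :: "(real^3) set" and xhat y :: "real^3"
  assumes D: "bounded D" "open D" "D \<noteq> {}" and xh: "norm xhat = 1"
    and t: "0 \<le> tmin" "tmin \<le> \<eta>" "\<eta> < tmax" and e: "\<epsilon> > 0" and K: "K > 0"
    and ny: "y \<notin> closure (strip_K_eta xhat D tmin \<eta>)"
    and rng: "in_range_L xhat D tmin tmax K (test_fun xhat tmax y \<eta> \<epsilon>)"
  shows False
proof -
  let ?S = "D \<times> {tmin<..<tmax}"
  let ?S2 = "ball y \<epsilon> \<times> {\<eta><..<tmax}"
  define c where "c = 1 / ((tmax - \<eta>) * measure lborel (ball y \<epsilon>))"
  have c0: "c > 0" unfolding c_def using measure_ball_pos[OF e, of y] t by simp
  obtain u where u: "u \<in> L2_D D tmin tmax"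
    and ae: "AE \<tau> in lborel. \<tau> \<in> {0<..<K} \<longrightarrow> L_op xhat D tmin tmax u \<tau> = test_fun xhat tmax y \<eta> \<epsilon> \<tau>"
    using rng unfolding in_range_L_def by blast
  obtain R where R: "R \<ge> 0" "\<And>z. z \<in> D \<Longrightarrow> \<bar>xhat \<bullet> z\<bar> \<le> R" using inner_bound_D[OF D(1) xh] by metis
  define w1 where "w1 p = indicator ?S p *\<^sub>R u p" for p
  define w2 where "w2 p = complex_of_real (c * indicator ?S2 p)" for p
  define a where "a = - (R + norm y + \<epsilon>)"
  define b where "b = tmax + R + norm y + \<epsilon>"
  have g1: "good lborel (sig xhat) w1 a b"
    unfolding good_def
  proof (intro conjI ballI impI)
    show "integrable lborel w1" unfolding w1_def by (rule L2_integrable[OF u D(1,2)])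
    show "sig xhat \<in> borel_measurable lborel" by (rule sig_meas)
    fix p assume "w1 p \<noteq> 0"
    then have p: "fst p \<in> D" "tmin < snd p" "snd p < tmax" by (auto simp: w1_def indicator_def split: if_splits)
    have h1: "\<bar>xhat \<bullet> fst p\<bar> \<le> R" using R p by auto
    have h2: "0 \<le> norm y" by simp
    have "a \<le> sig xhat p" "sig xhat p \<le> b"
      using h1 h2 p t e unfolding sig_def a_def b_def abs_le_iff by linarith+
    then show "sig xhat p \<in> {a..b}" by simp
  qed
  have g2: "good lborel (sig xhat) w2 a b"
    unfolding good_def
  proof (intro conjI ballI impI)
    have "integrable lborel (\<lambda>p. c * indicator ?S2 p)"
      by (intro integrable_mult_right integrable_real_indicator open_sets_lborel bounded_fin)
         (auto simp: open_Times bounded_Times)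
    then show "integrable lborel w2" unfolding w2_def by (rule iffD2[OF complex_of_real_integrable_eq])
    show "sig xhat \<in> borel_measurable lborel" by (rule sig_meas)
    fix p assume "w2 p \<noteq> 0"
    then have p: "fst p \<in> ball y \<epsilon>" "\<eta> < snd p" "snd p < tmax" by (auto simp: w2_def indicator_def split: if_splits)
    have "norm (fst p) \<le> norm y + \<epsilon>" using p(1) norm_triangle_ineq2[of "fst p" y]
      by (auto simp: dist_norm norm_minus_commute)
    then have "\<bar>xhat \<bullet> fst p\<bar> \<le> norm y + \<epsilon>" using Cauchy_Schwarz_ineq2[of xhat "fst p"] xh by simp
    then show "sig xhat p \<in> {a..b}" using p t e R unfolding sig_def a_def b_def by auto
  qed
  interpret twog lborel "sig xhat" w1 lborel "sig xhat" w2 a b using g1 g2 by unfold_locales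
  have ae2: "AE \<tau> in lborel. \<tau> \<in> {0<..<K} \<longrightarrow> Dl (\<lambda>s. iexp (\<tau> * s)) = 0"
    using ae unfolding Dl_def L_op_Lam test_fun_Lam w1_def w2_def c_def by simp
  note U = uniqueness[OF K ae2]
  let ?I = "(\<lambda>z. xhat \<bullet> z) ` D"
  have cases: "xhat \<bullet> y < Inf ?I \<or> xhat \<bullet> y > Sup ?I - tmin + \<eta>"
    using not_closure_strip[OF D(1) xh D(2) D(3) t(2) ny] .
  have lam2: "Lam lborel (sig xhat) w2 (\<lambda>s. complex_of_real (\<phi> s)) = complex_of_real (integral\<^sup>L lborel (\<lambda>p. c * \<phi> (sig xhat p) * indicator ?S2 p))"
    for \<phi>
    unfolding Lam_def w2_def by (simp add: mult_ac flip: of_real_mult)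
  show False
    using cases
  proof
    assume yl: "xhat \<bullet> y < Inf ?I"
    define m where "m = Inf ?I"
    define \<phi> where "\<phi> s = max 0 (s - (tmax - m))" for s
    have cphi: "continuous_on UNIV \<phi>" unfolding \<phi>_def by (intro continuous_intros)
    have "Lam lborel (sig xhat) w1 (\<lambda>s. complex_of_real (\<phi> s)) = 0"
      unfolding Lam_def
    proof (rule Bochner_Integration.integral_eq_zero_AE, rule AE_I2)
      fix p
      show "complex_of_real (\<phi> (sig xhat p)) * w1 p = 0"
      proof (cases "p \<in> ?S")
        case True
        have "m \<le> xhat \<bullet> fst p" using inf_sup_D[OF D(1) xh] True by (auto simp: m_def)
        then have "\<phi> (sig xhat p) = 0" using True by (auto simp: \<phi>_def sig_def)
        then show ?thesis by simp
      qed (simp add: w1_def)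
    qed
    moreover have "integral\<^sup>L lborel (\<lambda>p. c * \<phi> (sig xhat p) * indicator ?S2 p) > 0"
    proof -
      define d where "d = min ((tmax - \<eta>)/2) ((m - xhat \<bullet> y)/2)"
      have d: "0 < d" "d < tmax - \<eta>" "d < m - xhat \<bullet> y" using t yl by (auto simp: d_def m_def min_def)
      let ?U = "?S2 \<inter> {p. tmax - m < sig xhat p}"
      show ?thesis
      proof (rule integral_pos_open[of _ ?U "(y, tmax - d)"])
        have "integrable lborel (\<lambda>p. complex_of_real (\<phi> (sig xhat p)) * w2 p)"
          by (rule good_integrable[OF g2]) (intro continuous_intros cphi)
        then show "integrable lborel (\<lambda>p. c * \<phi> (sig xhat p) * indicator ?S2 p)"
          unfolding w2_def by (simp add: mult_ac complex_of_real_integrable_eq flip: of_real_mult)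
        show "0 \<le> c * \<phi> (sig xhat p) * indicator ?S2 p" for p
          using c0 by (auto simp: \<phi>_def indicator_def)
        show "open ?U" by (intro open_Int open_Times open_ball open_greaterThanLessThan open_Collect_less
              continuous_intros sig_cont)
        show "(y, tmax - d) \<in> ?U" using d e by (auto simp: sig_def)
        show "0 < c * \<phi> (sig xhat p) * indicator ?S2 p" if "p \<in> ?U" for p
          using that c0 by (auto simp: \<phi>_def indicator_def)
      qed
    qed
    ultimately show False using U[OF cphi] lam2[of \<phi>] by simp
  next
    assume yl: "xhat \<bullet> y > Sup ?I - tmin + \<eta>"
    define M where "M = Sup ?I"
    define \<phi> where "\<phi> s = max 0 ((tmin - M) - s)" for s
    have cphi: "continuous_on UNIV \<phi>" unfolding \<phi>_def by (intro continuous_intros)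
    have "Lam lborel (sig xhat) w1 (\<lambda>s. complex_of_real (\<phi> s)) = 0"
      unfolding Lam_def
    proof (rule Bochner_Integration.integral_eq_zero_AE, rule AE_I2)
      fix p
      show "complex_of_real (\<phi> (sig xhat p)) * w1 p = 0"
      proof (cases "p \<in> ?S")
        case True
        have "xhat \<bullet> fst p \<le> M" using inf_sup_D[OF D(1) xh] True by (auto simp: M_def)
        then have "\<phi> (sig xhat p) = 0" using True by (auto simp: \<phi>_def sig_def)
        then show ?thesis by simp
      qed (simp add: w1_def)
    qed
    moreover have "integral\<^sup>L lborel (\<lambda>p. c * \<phi> (sig xhat p) * indicator ?S2 p) > 0"
    proof -
      define d where "d = min ((tmax - \<eta>)/2) ((xhat \<bullet> y - (M - tmin + \<eta>))/2)"
      have d: "0 < d" "d < tmax - \<eta>" "d < xhat \<bullet> y - (M - tmin + \<eta>)" using t yl by (auto simp: d_def M_def min_def)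
      let ?U = "?S2 \<inter> {p. sig xhat p < tmin - M}"
      show ?thesis
      proof (rule integral_pos_open[of _ ?U "(y, \<eta> + d)"])
        have "integrable lborel (\<lambda>p. complex_of_real (\<phi> (sig xhat p)) * w2 p)"
          by (rule good_integrable[OF g2]) (intro continuous_intros cphi)
        then show "integrable lborel (\<lambda>p. c * \<phi> (sig xhat p) * indicator ?S2 p)"
          unfolding w2_def by (simp add: mult_ac complex_of_real_integrable_eq flip: of_real_mult)
        show "0 \<le> c * \<phi> (sig xhat p) * indicator ?S2 p" for p
          using c0 by (auto simp: \<phi>_def indicator_def)
        show "open ?U" by (intro open_Int open_Times open_ball open_greaterThanLessThan open_Collect_less
              continuous_intros sig_cont)
        show "(y, \<eta> + d) \<in> ?U" using d e by (auto simp: sig_def)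
        show "0 < c * \<phi> (sig xhat p) * indicator ?S2 p" if "p \<in> ?U" for p
          using that c0 by (auto simp: \<phi>_def indicator_def)
      qed
    qed
    ultimately show False using U[OF cphi] lam2[of \<phi>] by simp
  qed
qed



lemma translate_Lam:
  fixes xhat y z :: "real^3"
  assumes yz: "xhat \<bullet> z = xhat \<bullet> y"
  shows "Lam lborel (sig xhat) (\<lambda>p. complex_of_real (c * indicator (ball z \<epsilon> \<times> {\<eta><..<tmax}) p)) (\<lambda>s. iexp (\<tau> * s))
       = Lam lborel (sig xhat) (\<lambda>p. complex_of_real (c * indicator (ball y \<epsilon> \<times> {\<eta><..<tmax}) p)) (\<lambda>s. iexp (\<tau> * s))"
proof -
  define d :: "(real^3) \<times> real" where "d = (y - z, 0)"
  define F where "F p = iexp (\<tau> * sig xhat p) * complex_of_real (c * indicator (ball y \<epsilon> \<times> {\<eta><..<tmax}) p)" for p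
  have Fm: "F \<in> borel_measurable borel"
  proof -
    have "(\<lambda>p. iexp (\<tau> * sig xhat p)) \<in> borel_measurable borel"
      by (intro borel_measurable_continuous_onI continuous_intros sig_cont)
    moreover have "(\<lambda>p. complex_of_real (c * indicator (ball y \<epsilon> \<times> {\<eta><..<tmax}) p)) \<in> borel_measurable borel"
    proof -
      have o: "ball y \<epsilon> \<times> {\<eta><..<tmax} \<in> sets borel" by (simp add: open_Times)
      have "(\<lambda>p. c * indicator (ball y \<epsilon> \<times> {\<eta><..<tmax}) p) \<in> borel_measurable borel"
        using o by measurable
      then show ?thesis using measurable_compose[OF _ borel_measurable_of_real] by blast
    qed
    ultimately show ?thesis unfolding F_def by (rule borel_measurable_times)
  qed
  have dm: "(+) d \<in> measurable lborel borel"
    using borel_measurable_continuous_onI[of "(+) d"] by (simp add: continuous_intros)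
  have "Lam lborel (sig xhat) (\<lambda>p. complex_of_real (c * indicator (ball y \<epsilon> \<times> {\<eta><..<tmax}) p)) (\<lambda>s. iexp (\<tau> * s))
      = integral\<^sup>L lborel F" unfolding Lam_def F_def by simp
  also have "\<dots> = integral\<^sup>L (distr lborel borel ((+) d)) F" by (simp add: lborel_distr_plus)
  also have "\<dots> = (\<integral>p. F (d + p) \<partial>lborel)" by (rule integral_distr[OF dm Fm])
  also have "\<dots> = Lam lborel (sig xhat) (\<lambda>p. complex_of_real (c * indicator (ball z \<epsilon> \<times> {\<eta><..<tmax}) p)) (\<lambda>s. iexp (\<tau> * s))"
    unfolding Lam_def
  proof (intro Bochner_Integration.integral_cong refl)
    fix p :: "(real^3) \<times> real"
    have s: "sig xhat (d + p) = sig xhat p" using yz by (simp add: sig_def d_def inner_add_right inner_diff_right)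
    have "d + p \<in> ball y \<epsilon> \<times> {\<eta><..<tmax} \<longleftrightarrow> p \<in> ball z \<epsilon> \<times> {\<eta><..<tmax}"
      by (cases p) (simp add: d_def dist_norm algebra_simps)
    then show "F (d + p) = iexp (\<tau> * sig xhat p) * complex_of_real (c * indicator (ball z \<epsilon> \<times> {\<eta><..<tmax}) p)"
      unfolding F_def s by (simp add: indicator_def)
  qed
  finally show ?thesis ..
qed

lemma part1:
  fixes D :: "(real^3) set" and xhat y :: "real^3"
  assumes D: "bounded D" "open D" "connected D" "D \<noteq> {}" and xh: "norm xhat = 1"
    and t: "0 \<le> tmin" and y: "y \<in> strip_K xhat D"
  shows "\<exists>\<epsilon>0 > 0. \<forall>\<epsilon> \<in> {0<..<\<epsilon>0}. \<forall>\<eta> \<in> {tmin..<tmax}.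
            in_range_L xhat D tmin tmax K (test_fun xhat tmax y \<eta> \<epsilon>)"
proof -
  obtain z where z: "z \<in> D" "xhat \<bullet> z = xhat \<bullet> y" using strip_point[OF D(1) xh D(3) y D(4)] by blast
  obtain e0 where e0: "e0 > 0" "ball z e0 \<subseteq> D" using D(2) z(1) openE by blast
  have "\<forall>\<epsilon> \<in> {0<..<e0}. \<forall>\<eta> \<in> {tmin..<tmax}. in_range_L xhat D tmin tmax K (test_fun xhat tmax y \<eta> \<epsilon>)"
  proof (intro ballI)
    fix \<epsilon> \<eta> assume e: "\<epsilon> \<in> {0<..<e0}" and eta: "\<eta> \<in> {tmin..<tmax}"
    let ?S = "D \<times> {tmin<..<tmax}"
    let ?S3 = "ball z \<epsilon> \<times> {\<eta><..<tmax}"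
    define c where "c = 1 / ((tmax - \<eta>) * measure lborel (ball y \<epsilon>))"
    define u where "u p = complex_of_real (c * indicator ?S3 p)" for p
    have sub: "?S3 \<subseteq> ?S" using e0 e eta by auto
    have ind: "indicator ?S p *\<^sub>R u p = u p" for p
    proof (cases "p \<in> ?S3")
      case True
      then have "p \<in> ?S" using sub by blast
      then show ?thesis by simp
    next
      case False
      then show ?thesis by (simp add: u_def)
    qed
    have iu: "integrable lborel u"
    proof -
      have "integrable lborel (\<lambda>p. c * indicator ?S3 p)"
        by (intro integrable_mult_right integrable_real_indicator open_sets_lborel bounded_fin)
           (auto simp: open_Times bounded_Times)
      then show ?thesis unfolding u_def by (rule iffD2[OF complex_of_real_integrable_eq])
    qed
    have "u \<in> L2_D D tmin tmax"
      unfolding L2_D_def set_borel_measurable_def set_integrable_def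
    proof (intro CollectI conjI)
      show "(\<lambda>x. indicator ?S x *\<^sub>R u x) \<in> borel_measurable lborel"
        unfolding ind using iu by (rule borel_measurable_integrable)
      have "indicator ?S x *\<^sub>R (cmod (u x))\<^sup>2 = c^2 * indicator ?S3 x" for x
      proof (cases "x \<in> ?S3")
        case True
        then have "x \<in> ?S" using sub by blast
        then show ?thesis using True by (simp add: u_def power2_abs)
      next
        case False
        then show ?thesis by (simp add: u_def)
      qed
      then have "(\<lambda>x. indicator ?S x *\<^sub>R (cmod (u x))\<^sup>2) = (\<lambda>x. c^2 * indicator ?S3 x)" by (rule ext)
      moreover have "integrable lborel (\<lambda>x. c^2 * indicator ?S3 x)"
        by (intro integrable_mult_right integrable_real_indicator open_sets_lborel bounded_fin)
           (auto simp: open_Times bounded_Times)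
      ultimately show "integrable lborel (\<lambda>x. indicator ?S x *\<^sub>R (cmod (u x))\<^sup>2)" by simp
    qed
    moreover have "L_op xhat D tmin tmax u \<tau> = test_fun xhat tmax y \<eta> \<epsilon> \<tau>" for \<tau>
      unfolding L_op_Lam test_fun_Lam ind unfolding u_def c_def by (rule translate_Lam[OF z(2)])
    ultimately show "in_range_L xhat D tmin tmax K (test_fun xhat tmax y \<eta> \<epsilon>)"
      unfolding in_range_L_def by auto
  qed
  then show ?thesis using e0 by blast
qed



theorem mainTheorem3:
  fixes D :: "(real^3) set" and tmin tmax kmin kmax :: real and xhat :: "real^3"
  assumes "bounded_lipschitz_domain D"
    and "connected (- closure D)"
    and "0 \<le> tmin" and "tmin < tmax"
    and "0 \<le> kmin" and "kmin < kmax"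
    and "norm xhat = 1"
  defines "K \<equiv> (kmax - kmin) / 2"
  shows "(\<forall>y \<in> strip_K xhat D. \<exists>\<epsilon>0 > 0. \<forall>\<epsilon> \<in> {0<..<\<epsilon>0}. \<forall>\<eta> \<in> {tmin..<tmax}.
            in_range_L xhat D tmin tmax K (test_fun xhat tmax y \<eta> \<epsilon>))
       \<and> (\<forall>\<eta> \<in> {tmin..<tmax}. \<forall>y. y \<notin> closure (strip_K_eta xhat D tmin \<eta>) \<longrightarrow>
            (\<forall>\<epsilon> > 0. \<not> in_range_L xhat D tmin tmax K (test_fun xhat tmax y \<eta> \<epsilon>)))"
proof -
  have D: "bounded D" "open D" "connected D" "D \<noteq> {}"
    using assms(1) unfolding bounded_lipschitz_domain_def by auto
  have K: "K > 0" using assms(6) unfolding K_def by simp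
  have P1: "\<forall>y \<in> strip_K xhat D. \<exists>\<epsilon>0 > 0. \<forall>\<epsilon> \<in> {0<..<\<epsilon>0}. \<forall>\<eta> \<in> {tmin..<tmax}.
            in_range_L xhat D tmin tmax K (test_fun xhat tmax y \<eta> \<epsilon>)"
    using part1[OF D assms(7) assms(3)] by blast
  have P2: "\<forall>\<eta> \<in> {tmin..<tmax}. \<forall>y. y \<notin> closure (strip_K_eta xhat D tmin \<eta>) \<longrightarrow>
            (\<forall>\<epsilon> > 0. \<not> in_range_L xhat D tmin tmax K (test_fun xhat tmax y \<eta> \<epsilon>))"
  proof (intro ballI allI impI notI)
    fix \<eta> \<epsilon> :: real and y :: "real^3"
    assume eta: "\<eta> \<in> {tmin..<tmax}" and ny: "y \<notin> closure (strip_K_eta xhat D tmin \<eta>)"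
      and e: "\<epsilon> > 0" and r: "in_range_L xhat D tmin tmax K (test_fun xhat tmax y \<eta> \<epsilon>)"
    show False
      by (rule part2[OF D(1,2,4) assms(7) assms(3) _ _ e K ny r]) (use eta in auto)
  qed
  show ?thesis using P1 P2 by blast
qed

end
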